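(* Let $G \in \{\mathrm{U}, \mathrm{Sp}, \mathrm{O}, \mathrm{SO(even)}, \mathrm{SO(odd)}\}$ and $\Delta>0$. Let $F:\mathbb{C}\to\mathbb{C}$ be an entire function. Then $F\in\mathcal{H}_{\pi\Delta}$ if and only if $F\in\mathcal{H}_{G,\pi\Delta}$. Moreover, there exist positive constants $C^+$ and $C^-$, possibly depending on $\Delta$, such that \[ C^- \|F\|_{L^2(\mathbb{R})} \le \|F\|_{L^2(\mathbb{R}, W_G)} \le C^+ \|F\|_{L^2(\mathbb{R})} \] for all $F\in\mathcal{H}_{\pi\Delta}$.
   Context: $\mathcal{H}_{\pi\Delta}$ (Paley–Wiener space) is the space of entire functions of exponential type at most $\pi\Delta$ whose restriction to $\mathbb{R}$ is in $L^2(\mathbb{R})$. Densities: $W_{\mathrm U}=1$; $W_{\mathrm{Sp}}(x)=1-\frac{\sin 2\pi x}{2\pi x}$; $W_{\mathrm O}(x)=1+\frac12\boldsymbol{\delta}_0(x)$; $W_{\mathrm{SO(even)}}(x)=1+\frac{\sin 2\pi x}{2\pi x}$; $W_{\mathrm{SO(odd)}}(x)=1-\frac{\sin 2\pi x}{2\pi x}+\boldsymbol{\delta}_0(x)$, with $\boldsymbol{\delta}_0$ the Dirac delta at $0$, and $\|F\|^2_{L^2(\mathbb{R},W_G)}=\int_{\mathbb{R}}|F(x)|^2W_G(x)\,dx$ (the delta contributing the corresponding multiple of $|F(0)|^2$). $\mathcal{H}_{G,\pi\Delta}$ is the space of entire functions $F$ of exponential type at most $\pi\Delta$ with $\|F\|_{L^2(\mathbb{R},W_G)}<\infty$.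 *)

theory Defs
  imports "HOL-Analysis.Analysis"
begin

datatype symgroup = GU | GSp | GO | GSOeven | GSOodd

definition exp_type_le :: "(complex \<Rightarrow> complex) \<Rightarrow> real \<Rightarrow> bool" where
  "exp_type_le F tau \<longleftrightarrow>
     (\<forall>\<epsilon>>0. \<exists>C. \<forall>z. norm (F z) \<le> C * exp ((tau + \<epsilon>) * norm z))"

definition sinc2 :: "real \<Rightarrow> real" where
  "sinc2 x = (if x = 0 then 1 else sin (2 * pi * x) / (2 * pi * x))"

text \<open>Absolutely continuous part of the density W_G.\<close>
fun Wac :: "symgroup \<Rightarrow> real \<Rightarrow> real" where
  "Wac GU x = 1"
| "Wac GSp x = 1 - sinc2 x"
| "Wac GO x = 1"
| "Wac GSOeven x = 1 + sinc2 x"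
| "Wac GSOodd x = 1 - sinc2 x"

text \<open>Coefficient of the Dirac delta at 0 in W_G.\<close>
fun Wdelta :: "symgroup \<Rightarrow> real" where
  "Wdelta GU = 0"
| "Wdelta GSp = 0"
| "Wdelta GO = 1/2"
| "Wdelta GSOeven = 0"
| "Wdelta GSOodd = 1"

definition L2norm :: "(complex \<Rightarrow> complex) \<Rightarrow> real" where
  "L2norm F = sqrt (integral\<^sup>L lborel (\<lambda>x. (cmod (F (of_real x)))\<^sup>2))"

definition WL2norm :: "symgroup \<Rightarrow> (complex \<Rightarrow> complex) \<Rightarrow> real" where
  "WL2norm G F = sqrt (integral\<^sup>L lborel (\<lambda>x. (cmod (F (of_real x)))\<^sup>2 * Wac G x)
                       + Wdelta G * (cmod (F 0))\<^sup>2)"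

definition PW :: "real \<Rightarrow> (complex \<Rightarrow> complex) set" where
  "PW tau = {F. F holomorphic_on UNIV \<and> exp_type_le F tau \<and>
       integrable lborel (\<lambda>x. (cmod (F (of_real x)))\<^sup>2)}"

text \<open>H_{G,tau}: entire, exponential type at most tau, finite weighted L2 norm
  (the delta part is always finite).\<close>
definition PWG :: "symgroup \<Rightarrow> real \<Rightarrow> (complex \<Rightarrow> complex) set" where
  "PWG G tau = {F. F holomorphic_on UNIV \<and> exp_type_le F tau \<and>
       (\<integral>\<^sup>+ x. ennreal ((cmod (F (of_real x)))\<^sup>2 * Wac G x) \<partial>lborel) < \<infinity>}"

end

theory Submission
  imports Defs "HOL-Complex_Analysis.Complex_Analysis" "HOL-Real_Asymp.Real_Asymp"
begin

lemma le_of_forall_exp: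
  fixes a B X :: real
  assumes "\<And>d. d > 0 \<Longrightarrow> a \<le> B * exp (d * X)"
  shows "a \<le> B"
proof -
  have "((\<lambda>d. B * exp (d * X)) \<longlongrightarrow> B * exp (0 * X)) (at_right 0)"
    by (intro tendsto_intros)
  then have lim: "((\<lambda>d. B * exp (d * X)) \<longlongrightarrow> B) (at_right 0)" by simp
  have "eventually (\<lambda>d. a \<le> B * exp (d * X)) (at_right (0::real))"
    using eventually_at_right_less[of "0::real"] by (rule eventually_mono) (use assms in auto)
  then show ?thesis using tendsto_lowerbound[OF lim] by simp
qed

lemma frontier_sub:
  assumes "open S" "closed T" "S \<subseteq> T"
  shows "frontier S \<subseteq> T - S"
  using assms closure_minimal[of S T] by (auto simp: frontier_def interior_open)

lemma csqrt_cube_bound: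
  assumes "Re w \<ge> \<bar>Im w\<bar>"
  shows "Re (w * csqrt w) \<ge> (Re (csqrt w))^3 / 4" "norm w \<le> 2 * (Re (csqrt w))^2"
proof -
  define s where "s = csqrt w"
  have w: "w = s^2" by (simp add: s_def)
  define p where "p = Re s"
  define q where "q = Im s"
  have p0: "p \<ge> 0" unfolding p_def s_def by (rule Re_csqrt)
  have Rew: "Re w = p^2 - q^2" and Imw: "Im w = 2*p*q"
    by (simp_all add: w p_def q_def power2_eq_square)
  have ws: "Re (w * s) = p^3 - 3*p*q^2"
    by (simp add: w p_def q_def power2_eq_square power3_eq_cube algebra_simps)
  have nw: "norm w = p^2 + q^2"
    by (simp add: w norm_power cmod_power2 p_def q_def)
  have h: "p^2 - q^2 \<ge> 2*p*\<bar>q\<bar>" using assms Rew Imw p0 by (simp add: abs_mult)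
  have qa: "\<bar>q\<bar> \<le> p/2"
  proof (rule ccontr)
    assume "\<not> \<bar>q\<bar> \<le> p/2"
    then have a: "\<bar>q\<bar> > p/2" by simp
    then have "2*p*\<bar>q\<bar> \<ge> 2*p*(p/2)" using p0 by (intro mult_left_mono) auto
    then have "q^2 \<le> 0" using h by (simp add: power2_eq_square)
    then have "q = 0" by simp
    with a p0 show False by simp
  qed
  have qp: "q^2 \<le> p^2/4"
  proof -
    have "\<bar>q\<bar>^2 \<le> (p/2)^2" using qa by (intro power_mono) auto
    then show ?thesis by (simp add: power_divide)
  qed
  show "Re (w * csqrt w) \<ge> (Re (csqrt w))^3 / 4"
  proof -
    have "3*p*q^2 \<le> 3*p*(p^2/4)" using qp p0 by (intro mult_left_mono) auto
    then have "p^3 - 3*p*q^2 \<ge> p^3/4" by (simp add: power2_eq_square power3_eq_cube)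
    then show ?thesis using ws by (simp add: s_def p_def)
  qed
  show "norm w \<le> 2 * (Re (csqrt w))^2" using nw qp zero_le_power2[of q] unfolding s_def[symmetric] p_def[symmetric] by linarith
qed

lemma n1: "norm (1 - \<i>) = sqrt 2" by (simp add: cmod_def)

lemma PL_quadrant:
  fixes g :: "complex \<Rightarrow> complex"
  assumes hol: "g holomorphic_on UNIV"
    and grow: "\<And>z. norm (g z) \<le> C * exp (b * norm z)"
    and bre: "\<And>x. x \<ge> 0 \<Longrightarrow> norm (g (of_real x)) \<le> B"
    and bim: "\<And>y. y \<ge> 0 \<Longrightarrow> norm (g (\<i> * of_real y)) \<le> B"
    and B: "B > 0" and z0: "Re z0 \<ge> 0" "Im z0 \<ge> 0"
  shows "norm (g z0) \<le> B"
proof (cases "Re z0 = 0 \<or> Im z0 = 0")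
  case True
  then show ?thesis
  proof
    assume "Re z0 = 0"
    then have "z0 = \<i> * of_real (Im z0)" by (simp add: complex_eq_iff)
    then show ?thesis using bim[of "Im z0"] z0 by simp
  next
    assume "Im z0 = 0"
    then have "z0 = of_real (Re z0)" by (simp add: complex_eq_iff)
    then show ?thesis using bre[of "Re z0"] z0 by simp
  qed
next
  case False
  with z0 have z0p: "Re z0 > 0" "Im z0 > 0" by auto
  define W where "W z = (1 - \<i>) * z + 1" for z
  have ReW: "Re (W z) = Re z + Im z + 1" and ImW: "Im (W z) = Im z - Re z" for z
    by (simp_all add: W_def)
  have Wq: "Re (W z) \<ge> \<bar>Im (W z)\<bar>" if "Re z \<ge> 0" "Im z \<ge> 0" for z
    using that by (simp add: ReW ImW)
  define U where "U = {z. 0 < Re z + Im z + 1}"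
  have openU: "open U" unfolding U_def
    by (intro open_Collect_less continuous_intros)
  have WU: "W z \<notin> \<real>\<^sub>\<le>\<^sub>0" if "z \<in> U" for z
    using that by (simp add: U_def complex_nonpos_Reals_iff ReW)
  define X where "X z = Re (W z * csqrt (W z))" for z
  have X0: "X z \<ge> 0" if "Re z \<ge> 0" "Im z \<ge> 0" for z
  proof -
    have "X z \<ge> (Re (csqrt (W z)))^3 / 4" unfolding X_def by (rule csqrt_cube_bound(1)[OF Wq[OF that]])
    moreover have "(Re (csqrt (W z)))^3 \<ge> 0" using Re_csqrt by simp
    ultimately show ?thesis by linarith
  qed
  have main: "norm (g z0) \<le> B * exp (d * X z0)" if d: "d > 0" for d
  proof -
    define h where "h z = g z * exp (- (of_real d * (W z * csqrt (W z))))" for z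
    have nh: "norm (h z) = norm (g z) * exp (- d * X z)" for z
      by (simp add: h_def norm_mult norm_exp_eq_Re X_def)
    have holh: "h holomorphic_on U"
      unfolding h_def W_def
      by (intro holomorphic_intros holomorphic_on_subset[OF hol]) (use WU[unfolded W_def] in auto)
    have nhq: "norm (h z) \<le> norm (g z)" if "Re z \<ge> 0" "Im z \<ge> 0" for z
    proof -
      have "exp (- d * X z) \<le> 1" using X0[OF that] d by (simp add: mult_nonneg_nonneg)
      then show ?thesis unfolding nh by (simp add: mult_left_le)
    qed
    have ev1: "eventually (\<lambda>R. C * exp (b*R - d/4 * sqrt((R-1)/2)^3) < B) at_top"
    proof -
      have "((\<lambda>R. C * exp (b*R - d/4 * sqrt((R-1)/2)^3)) \<longlongrightarrow> 0) at_top"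
        using d by real_asymp
      then show ?thesis using B by (rule order_tendstoD)
    qed
    have ev2: "eventually (\<lambda>R. R > max 2 (norm z0)) at_top" by (rule eventually_gt_at_top)
    obtain R where R: "C * exp (b*R - d/4 * sqrt((R-1)/2)^3) < B" "R > max 2 (norm z0)"
      using eventually_happens'[OF trivial_limit_at_top_linorder eventually_conj[OF ev1 ev2]] by blast
    define S where "S = {z. 0 < Re z} \<inter> {z. 0 < Im z} \<inter> ball 0 R"
    define T where "T = {z. 0 \<le> Re z} \<inter> {z. 0 \<le> Im z} \<inter> cball 0 R"
    have openS: "open S" unfolding S_def
      by (intro open_Int open_halfspace_Re_gt open_halfspace_Im_gt open_ball)
    have closedT: "closed T" unfolding T_def
      by (intro closed_Int closed_halfspace_Re_ge closed_halfspace_Im_ge closed_cball)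
    have ST: "S \<subseteq> T" unfolding S_def T_def by auto
    have TU: "T \<subseteq> U" unfolding T_def U_def by auto
    have clS: "closure S \<subseteq> T" using closure_minimal[OF ST closedT] .
    have "norm (h z0) \<le> B"
    proof (rule maximum_modulus_frontier[of h S])
      show "h holomorphic_on interior S" using holh ST TU by (simp add: interior_open[OF openS] holomorphic_on_subset)
      show "continuous_on (closure S) h"
        using holomorphic_on_imp_continuous_on[OF holh] clS TU continuous_on_subset by blast
      show "bounded S" unfolding S_def by (meson Int_lower2 bounded_ball bounded_subset)
      show "z0 \<in> S" using z0p R unfolding S_def by auto
      fix z assume "z \<in> frontier S"
      then have zT: "z \<in> T" and zS: "z \<notin> S" using frontier_sub[OF openS closedT ST] by auto
      then have zq: "Re z \<ge> 0" "Im z \<ge> 0" "norm z \<le> R" unfolding T_def by auto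
      have "Re z = 0 \<or> Im z = 0 \<or> norm z = R" using zT zS unfolding S_def T_def by auto
      then show "norm (h z) \<le> B"
      proof (elim disjE)
        assume "Re z = 0"
        then have "z = \<i> * of_real (Im z)" by (simp add: complex_eq_iff)
        then show ?thesis using nhq[OF zq(1,2)] bim[of "Im z"] zq by (metis order.trans)
      next
        assume "Im z = 0"
        then have "z = of_real (Re z)" by (simp add: complex_eq_iff)
        then show ?thesis using nhq[OF zq(1,2)] bre[of "Re z"] zq by (metis order.trans)
      next
        assume nz: "norm z = R"
        define p where "p = Re (csqrt (W z))"
        have p0: "p \<ge> 0" unfolding p_def by (rule Re_csqrt)
        have "norm ((1 - \<i>) * z) \<ge> norm z"
        proof -
          have "norm ((1 - \<i>) * z) = sqrt 2 * norm z" by (simp add: norm_mult n1)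
          moreover have "sqrt 2 \<ge> (1::real)" by simp
          ultimately show ?thesis by (metis mult_right_mono mult_1 norm_ge_zero)
        qed
        then have "norm (W z) \<ge> R - 1" unfolding W_def using nz
          using norm_diff_ineq[of "(1 - \<i>) * z" 1] by simp
        then have "2 * p^2 \<ge> R - 1" using csqrt_cube_bound(2)[OF Wq[OF zq(1,2)]] unfolding p_def by linarith
        then have "p^2 \<ge> (R-1)/2" by simp
        then have "p \<ge> sqrt ((R-1)/2)" using p0 by (metis real_sqrt_abs abs_of_nonneg real_sqrt_le_iff)
        then have "p^3 \<ge> sqrt ((R-1)/2)^3" using R(2) by (intro power_mono) auto
        moreover have "X z \<ge> p^3/4" unfolding X_def p_def by (rule csqrt_cube_bound(1)[OF Wq[OF zq(1,2)]])
        ultimately have Xz: "X z \<ge> sqrt ((R-1)/2)^3 / 4" by linarith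
        have "d * (sqrt ((R-1)/2)^3 / 4) \<le> d * X z" using Xz d by (intro mult_left_mono) auto
        then have e1: "exp (- d * X z) \<le> exp (- d/4 * sqrt ((R-1)/2)^3)"
          by (subst exp_le_cancel_iff) linarith
        have g1: "norm (g z) \<le> C * exp (b * R)" using grow[of z] nz by simp
        have "norm (h z) \<le> C * exp (b * R) * exp (- d/4 * sqrt ((R-1)/2)^3)"
          unfolding nh by (rule mult_mono[OF g1 e1]) (use g1 in \<open>auto intro: order_trans[OF norm_ge_zero]\<close>)
        also have "\<dots> = C * exp (b*R - d/4 * sqrt((R-1)/2)^3)" by (simp add: mult.assoc flip: exp_add)
        finally show ?thesis using R by linarith
      qed
    qed
    then have a: "norm (g z0) * exp (- d * X z0) \<le> B" using nh by simp
    have "norm (g z0) = (norm (g z0) * exp (- d * X z0)) * exp (d * X z0)"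
      by (simp add: mult.assoc flip: exp_add)
    also have "\<dots> \<le> B * exp (d * X z0)" by (rule mult_right_mono[OF a]) simp
    finally show ?thesis .
  qed
  show ?thesis by (rule le_of_forall_exp[OF main])
qed

lemma PL_halfplane:
  fixes g :: "complex \<Rightarrow> complex"
  assumes hol: "g holomorphic_on UNIV"
    and bnd: "\<And>z. Im z \<ge> 0 \<Longrightarrow> norm (g z) \<le> B"
    and bre: "\<And>x. norm (g (of_real x)) \<le> M"
    and M: "M > 0" and z0: "Im z0 \<ge> 0"
  shows "norm (g z0) \<le> M"
proof -
  have main: "norm (g z0) \<le> M * exp (d * norm z0)" if d: "d > 0" for d
  proof -
    define D where "D z = 1 - \<i> * of_real d * z" for z
    have ReD: "Re (D z) = 1 + d * Im z" for z by (simp add: D_def)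
    define U where "U = {z. 0 < 1 + d * Im z}"
    have openU: "open U" unfolding U_def by (intro open_Collect_less continuous_intros)
    have DU: "D z \<noteq> 0" if "z \<in> U" for z
      using that ReD[of z] unfolding U_def by force
    define h where "h z = g z / D z" for z
    have holh: "h holomorphic_on U"
      unfolding h_def using DU unfolding D_def
      by (intro holomorphic_intros holomorphic_on_subset[OF hol]) auto
    have D1: "norm (D z) \<ge> 1" if "Im z \<ge> 0" for z
      using complex_Re_le_cmod[of "D z"] ReD[of z] that d by (smt (verit) mult_nonneg_nonneg)
    have D2: "norm (D z) \<ge> d * norm z - 1" for z
    proof -
      have "norm (\<i> * of_real d * z) = d * norm z" using d by (simp add: norm_mult)
      then show ?thesis using norm_diff_ineq[of "- (\<i> * of_real d * z)" 1] unfolding D_def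
        by (simp add: algebra_simps)
    qed
    have nhq: "norm (h z) \<le> norm (g z)" if "Im z \<ge> 0" for z
    proof -
      have "norm (h z) = norm (g z) / norm (D z)" by (simp add: h_def norm_divide)
      also have "\<dots> \<le> norm (g z)" using D1[OF that] by (simp add: divide_le_eq mult_le_cancel_left1 order_trans[OF _ mult_right_mono])
      finally show ?thesis .
    qed
    define R where "R = max (norm z0 + 1) ((B / M + 1) / d)"
    have R0: "R > norm z0" "R > 0" unfolding R_def by (smt (verit) norm_ge_zero max.cobounded1)+
    have RB: "d * R - 1 \<ge> B / M" unfolding R_def using d by (simp add: field_simps max_def)
    have B0: "B \<ge> 0" using order_trans[OF norm_ge_zero bnd[of 0]] by simp
    define S where "S = {z. 0 < Im z} \<inter> ball 0 R"
    define T where "T = {z. 0 \<le> Im z} \<inter> cball 0 R"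
    have openS: "open S" unfolding S_def by (intro open_Int open_halfspace_Im_gt open_ball)
    have closedT: "closed T" unfolding T_def by (intro closed_Int closed_halfspace_Im_ge closed_cball)
    have ST: "S \<subseteq> T" unfolding S_def T_def by auto
    have TU: "T \<subseteq> U" unfolding T_def U_def using d by (auto simp: add_pos_nonneg)
    have clS: "closure S \<subseteq> T" using closure_minimal[OF ST closedT] .
    have hz0: "norm (h z0) \<le> M"
    proof (cases "Im z0 = 0")
      case True
      then have "z0 = of_real (Re z0)" by (simp add: complex_eq_iff)
      then show ?thesis using nhq[OF z0] bre[of "Re z0"] by (metis order.trans)
    next
      case False
      show ?thesis
      proof (rule maximum_modulus_frontier[of h S])
        show "h holomorphic_on interior S" using holh ST TU by (simp add: interior_open[OF openS] holomorphic_on_subset)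
        show "continuous_on (closure S) h"
          using holomorphic_on_imp_continuous_on[OF holh] clS TU continuous_on_subset by blast
        show "bounded S" unfolding S_def by (meson Int_lower2 bounded_ball bounded_subset)
        show "z0 \<in> S" using z0 False R0 unfolding S_def by auto
        fix z assume "z \<in> frontier S"
        then have zT: "z \<in> T" and zS: "z \<notin> S" using frontier_sub[OF openS closedT ST] by auto
        then have zq: "Im z \<ge> 0" "norm z \<le> R" unfolding T_def by auto
        have "Im z = 0 \<or> norm z = R" using zT zS unfolding S_def T_def by auto
        then show "norm (h z) \<le> M"
        proof
          assume "Im z = 0"
          then have "z = of_real (Re z)" by (simp add: complex_eq_iff)
          then show ?thesis using nhq[OF zq(1)] bre[of "Re z"] by (metis order.trans)
        next
          assume nz: "norm z = R"
          have Dz: "norm (D z) \<ge> B / M" using D2[of z] nz RB by simp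
          have Dp: "norm (D z) \<ge> 1" using D1[OF zq(1)] .
          have "norm (h z) = norm (g z) / norm (D z)" by (simp add: h_def norm_divide)
          also have "\<dots> \<le> B / norm (D z)" using bnd[OF zq(1)] Dp by (simp add: divide_right_mono)
          also have "\<dots> \<le> B / (B / M)"
          proof (cases "B = 0")
            case False
            then have "B / M > 0" using B0 M by simp
            moreover have "norm (D z) > 0" using Dz \<open>B / M > 0\<close> by linarith
            ultimately have "0 < norm (D z) * (B / M)" by (rule mult_pos_pos[rotated])
            then show ?thesis using Dz B0 by (intro divide_left_mono)
          qed simp
          also have "\<dots> \<le> M" using M B0 by (cases "B = 0") auto
          finally show ?thesis .
        qed
      qed
    qed
    have "norm (g z0) = norm (h z0) * norm (D z0)"
    proof -
      have "z0 \<in> U" using TU z0 R0 unfolding T_def by auto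
      then show ?thesis using DU[of z0] by (simp add: h_def norm_divide)
    qed
    also have "\<dots> \<le> M * (1 + d * norm z0)"
    proof (rule mult_mono[OF hz0])
      show "norm (D z0) \<le> 1 + d * norm z0" unfolding D_def
        using norm_triangle_ineq4[of 1 "\<i> * of_real d * z0"] d by (simp add: norm_mult)
    qed (use M in auto)
    also have "\<dots> \<le> M * exp (d * norm z0)"
      using M by (intro mult_left_mono) (auto simp: exp_ge_add_one_self add.commute)
    finally show ?thesis .
  qed
  show ?thesis by (rule le_of_forall_exp[OF main])
qed

lemma PL_upper:
  fixes H :: "complex \<Rightarrow> complex"
  assumes hol: "H holomorphic_on UNIV"
    and grow: "\<And>z. norm (H z) \<le> C * exp (T * norm z)"
    and bre: "\<And>x. norm (H (of_real x)) \<le> M"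
    and M: "M > 0" and T: "T \<ge> 0" and z: "Im z \<ge> 0"
  shows "norm (H z) \<le> M * exp (T * Im z)"
proof -
  define g where "g z = H z * exp (\<i> * of_real T * z)" for z
  have ng: "norm (g z) = norm (H z) * exp (- T * Im z)" for z
    by (simp add: g_def norm_mult)
  have C0: "C \<ge> 0" using order_trans[OF norm_ge_zero grow[of 0]] by simp
  have holg: "g holomorphic_on UNIV" unfolding g_def by (intro holomorphic_intros hol)
  have growg: "norm (g z) \<le> C * exp ((2*T) * norm z)" for z
  proof -
    have "- Im z \<le> norm z" using abs_Im_le_cmod[of z] by linarith
    then have "T * (- Im z) \<le> T * norm z" using T by (rule mult_left_mono)
    then have "- T * Im z \<le> T * norm z" by simp
    then have e: "exp (- T * Im z) \<le> exp (T * norm z)" by simp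
    have "norm (g z) \<le> C * exp (T * norm z) * exp (T * norm z)"
      unfolding ng by (rule mult_mono[OF grow e]) (use C0 in auto)
    also have "\<dots> = C * exp ((2*T) * norm z)" by (simp add: mult.assoc flip: exp_add)
    finally show ?thesis .
  qed
  define B where "B = max M C"
  have B: "B > 0" "M \<le> B" "C \<le> B" using M unfolding B_def by auto
  have gre: "norm (g (of_real x)) \<le> M" for x using bre[of x] by (simp add: ng)
  have gim: "norm (g (\<i> * of_real y)) \<le> C" if "y \<ge> 0" for y
  proof -
    have "norm (g (\<i> * of_real y)) = norm (H (\<i> * of_real y)) * exp (- T * y)" by (simp add: ng)
    also have "\<dots> \<le> C * exp (T * y) * exp (- T * y)"
      using grow[of "\<i> * of_real y"] that by (intro mult_right_mono) (auto simp: norm_mult)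
    also have "\<dots> = C" by (simp add: mult.assoc flip: exp_add)
    finally show ?thesis .
  qed
  have uhp: "norm (g w) \<le> B" if w: "Im w \<ge> 0" for w
  proof (cases "Re w \<ge> 0")
    case True
    show ?thesis
    proof (rule PL_quadrant[OF holg growg _ _ B(1) True w])
      show "norm (g (of_real x)) \<le> B" for x using gre[of x] B by linarith
      show "norm (g (\<i> * of_real y)) \<le> B" if "y \<ge> 0" for y using gim[OF that] B by linarith
    qed
  next
    case False
    define w' where "w' = - \<i> * w"
    have w': "w = \<i> * w'" "Re w' \<ge> 0" "Im w' \<ge> 0" using False w by (auto simp: w'_def)
    have "norm (g (\<i> * w')) \<le> B"
    proof (rule PL_quadrant[of "\<lambda>z. g (\<i> * z)" C "2*T"])
      show "(\<lambda>z. g (\<i> * z)) holomorphic_on UNIV"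
        by (rule holomorphic_on_compose_gen[OF _ holg, unfolded o_def]) (auto intro: holomorphic_intros)
      show "norm (g (\<i> * z)) \<le> C * exp (2 * T * norm z)" for z using growg[of "\<i> * z"] by (simp add: norm_mult)
      show "norm (g (\<i> * of_real x)) \<le> B" if "x \<ge> 0" for x using gim[OF that] B by linarith
      show "norm (g (\<i> * (\<i> * of_real y))) \<le> B" if "y \<ge> 0" for y
        using gre[of "-y"] B by simp
    qed (use B w' in auto)
    then show ?thesis using w' by simp
  qed
  have "norm (g z) \<le> M" by (rule PL_halfplane[OF holg uhp gre M z])
  then have "norm (g z) * exp (T * Im z) \<le> M * exp (T * Im z)" by (intro mult_right_mono) auto
  moreover have "norm (g z) * exp (T * Im z) = norm (H z)"
    by (simp add: ng mult.assoc flip: exp_add)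
  ultimately show ?thesis by simp
qed

lemma PL_strip:
  fixes H :: "complex \<Rightarrow> complex"
  assumes hol: "H holomorphic_on UNIV"
    and grow: "\<And>z. norm (H z) \<le> C * exp (T * norm z)"
    and bre: "\<And>x. norm (H (of_real x)) \<le> M"
    and M: "M > 0" and T: "T \<ge> 0"
  shows "norm (H z) \<le> M * exp (T * \<bar>Im z\<bar>)"
proof (cases "Im z \<ge> 0")
  case True
  then show ?thesis using PL_upper[OF hol grow bre M T True] by simp
next
  case False
  have "norm (H (- (- z))) \<le> M * exp (T * Im (- z))"
  proof (rule PL_upper[of "\<lambda>z. H (- z)" C T M "- z"])
    show "(\<lambda>z. H (- z)) holomorphic_on UNIV"
      by (rule holomorphic_on_compose_gen[OF _ hol, unfolded o_def]) (auto intro: holomorphic_intros)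
    show "norm (H (- z)) \<le> C * exp (T * norm z)" for z using grow[of "-z"] by simp
    show "norm (H (- complex_of_real x)) \<le> M" for x using bre[of "-x"] by simp
  qed (use M T False in auto)
  then show ?thesis using False by simp
qed

lemma interval_le_lborel:
  fixes f :: "real \<Rightarrow> real"
  assumes int: "integrable lborel f" and nn: "\<And>x. f x \<ge> 0"
  shows "f integrable_on {a..b}" "integral {a..b} f \<le> integral\<^sup>L lborel f"
proof -
  have si: "set_integrable lborel {a..b} f"
    unfolding set_integrable_def by (rule integrable_mult_indicator) (use int in auto)
  show "f integrable_on {a..b}" using set_borel_integral_eq_integral(1)[OF si] .
  have "integral {a..b} f = (LINT x : {a..b} | lborel. f x)"
    using set_borel_integral_eq_integral(2)[OF si] by simp
  also have "\<dots> = integral\<^sup>L lborel (\<lambda>x. indicator {a..b} x *\<^sub>R f x)"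
    by (simp add: set_lebesgue_integral_def)
  also have "\<dots> \<le> integral\<^sup>L lborel f"
    using si int nn unfolding set_integrable_def
    by (intro integral_mono) (auto split: split_indicator)
  finally show "integral {a..b} f \<le> integral\<^sup>L lborel f" .
qed

lemma primitive_real_integral:
  fixes A F :: "complex \<Rightarrow> complex"
  assumes der: "\<And>z. (A has_field_derivative F z) (at z)" and ab: "a \<le> b"
  shows "((\<lambda>t. F (of_real t)) has_integral (A (of_real b) - A (of_real a))) {a..b}"
proof -
  have d: "((\<lambda>t. A (of_real t)) has_vector_derivative F (of_real t)) (at t within {a..b})" for t
  proof -
    have "((A \<circ> of_real) has_vector_derivative (1 * F (of_real t))) (at t)"
      by (rule field_vector_diff_chain_at[OF _ der]) (auto intro!: derivative_eq_intros)
    then show ?thesis by (auto simp: o_def intro: has_vector_derivative_at_within)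
  qed
  show ?thesis using fundamental_theorem_of_calculus[OF ab, of "\<lambda>t. A (of_real t)" "\<lambda>t. F (of_real t)"] d by blast
qed

lemma amgm_bound: "norm (u::complex) \<le> (c + (norm u)^2 / c) / 2" if "c > 0" for c :: real
proof -
  have "0 \<le> (c - norm u)^2" by simp
  then have "2 * c * norm u \<le> c^2 + (norm u)^2" by (simp add: power2_eq_square algebra_simps)
  then show ?thesis using that by (simp add: field_simps power2_eq_square)
qed

lemma PW_pointbound:
  fixes F :: "complex \<Rightarrow> complex" and \<tau> :: real
  assumes hol: "F holomorphic_on UNIV" and et: "exp_type_le F \<tau>" and \<tau>0: "\<tau> \<ge> 0"
    and int: "integrable lborel (\<lambda>x. (cmod (F (of_real x)))\<^sup>2)"
  shows "(cmod (F (of_real x)))\<^sup>2 \<le> (1 + 5 * exp (2*(\<tau>+1))) * (\<integral>x. (cmod (F (of_real x)))\<^sup>2 \<partial>lborel)"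
proof -
  define f where "f t = (cmod (F (of_real t)))\<^sup>2" for t
  define N where "N = integral\<^sup>L lborel f"
  define T where "T = \<tau> + 1"
  have T0: "T \<ge> 0" using \<tau>0 by (simp add: T_def)
  obtain C where C: "\<And>z. norm (F z) \<le> C * exp (T * norm z)"
    using et unfolding exp_type_le_def T_def by (metis zero_less_one)
  have C0: "C \<ge> 0" using order_trans[OF norm_ge_zero C[of 0]] by simp
  have contF: "continuous_on UNIV F" using hol by (rule holomorphic_on_imp_continuous_on)
  have cF: "continuous_on S (\<lambda>t. F (of_real t))" for S
    by (rule continuous_on_compose2[OF contF]) (auto intro: continuous_intros)
  have contf: "continuous_on S f" for S unfolding f_def by (intro continuous_intros cF)
  have fint: "integrable lborel f" using int by (simp add: f_def[abs_def])
  have f0: "f t \<ge> 0" for t by (simp add: f_def)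
  have N0: "N \<ge> 0" unfolding N_def by (intro integral_nonneg_AE) (simp add: f0)
  obtain A where der0: "\<And>z. z \<in> UNIV \<Longrightarrow> (A has_field_derivative F z) (at z within UNIV)"
    using holomorphic_convex_primitive'[OF convex_UNIV open_UNIV hol] by blast
  have der: "(A has_field_derivative F z) (at z)" for z using der0[of z] by simp
  have key: "norm (F (of_real (x + a)) - F (of_real x)) \<le> (c + N/(2*c)) * exp T"
    if a: "0 < a" "a \<le> 2" and c: "c > 0" for x a c
  proof -
    define H where "H z = A (z + of_real a) - A z" for z
    have dH: "(H has_field_derivative (F (z + of_real a) - F z)) (at z)" for z
    proof -
      have "((\<lambda>z. A (z + of_real a)) has_field_derivative F (z + of_real a) * 1) (at z)"
        by (rule DERIV_chain2[OF der]) (auto intro!: derivative_eq_intros)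
      then show ?thesis unfolding H_def by (auto intro!: derivative_eq_intros der)
    qed
    have holH: "H holomorphic_on UNIV"
      using dH by (auto simp: holomorphic_on_def field_differentiable_def)
    have growH: "norm (H z) \<le> (a * C * exp (T * a)) * exp (T * norm z)" for z
    proof -
      have ci: "(F has_contour_integral (A (z + of_real a) - A z)) (linepath z (z + of_real a))"
        using contour_integral_primitive[of UNIV A F "linepath z (z + of_real a)"] der by simp
      have "norm (A (z + of_real a) - A z) \<le> (C * exp (T * (norm z + a))) * norm (z + of_real a - z)"
      proof (rule has_contour_integral_bound_linepath[OF ci])
        show "0 \<le> C * exp (T * (norm z + a))" using C0 by simp
        fix w assume "w \<in> closed_segment z (z + of_real a)"
        then have "dist w z \<le> dist z (z + of_real a)" using dist_in_closed_segment by blast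
        then have "norm (w - z) \<le> a" using a by (simp add: dist_norm)
        then have "norm w \<le> norm z + a" using norm_triangle_ineq2[of w z] by linarith
        then have "exp (T * norm w) \<le> exp (T * (norm z + a))" using T0 by (simp add: mult_left_mono)
        then show "norm (F w) \<le> C * exp (T * (norm z + a))"
          using C[of w] C0 by (meson mult_left_mono order_trans)
      qed
      also have "\<dots> = (a * C * exp (T * a)) * exp (T * norm z)"
        using a by (simp add: distrib_left exp_add)
      finally show ?thesis unfolding H_def .
    qed
    define M where "M = (a * c + N / c) / 2"
    have M0: "M > 0" unfolding M_def using a c N0 by (simp add: add_pos_nonneg)
    have reH: "norm (H (of_real t)) \<le> M" for t
    proof -
      have hi: "((\<lambda>s. F (of_real s)) has_integral (A (of_real (t + a)) - A (of_real t))) {t..t+a}"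
        using primitive_real_integral[OF der, of t "t + a"] a by simp
      have fi: "f integrable_on {t..t+a}" using interval_le_lborel(1)[OF fint f0] .
      have gi: "(\<lambda>s. c/2 + (1/(2*c)) * f s) integrable_on {t..t+a}"
        by (intro integrable_add integrable_const_ivl integrable_on_mult_right fi)
      have "norm (A (of_real (t + a)) - A (of_real t)) = norm (integral {t..t+a} (\<lambda>s. F (of_real s)))"
        using hi by (simp add: integral_unique)
      also have "\<dots> \<le> integral {t..t+a} (\<lambda>s. c/2 + (1/(2*c)) * f s)"
      proof (rule integral_norm_bound_integral)
        show "(\<lambda>s. F (of_real s)) integrable_on {t..t+a}" using hi by blast
        show "(\<lambda>s. c/2 + (1/(2*c)) * f s) integrable_on {t..t+a}" by (rule gi)
        fix s show "norm (F (of_real s)) \<le> c/2 + (1/(2*c)) * f s"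
          using amgm_bound[OF c, of "F (of_real s)"] unfolding f_def by (simp add: field_simps)
      qed
      also have "\<dots> = integral {t..t+a} (\<lambda>s. c/2) + integral {t..t+a} (\<lambda>s. (1/(2*c)) * f s)"
        by (rule integral_add[OF integrable_const_ivl integrable_on_mult_right[OF fi]])
      also have "\<dots> = a * c / 2 + (1/(2*c)) * integral {t..t+a} f"
        using a by simp
      also have "\<dots> \<le> a * c / 2 + (1/(2*c)) * N"
        using interval_le_lborel(2)[OF fint f0, of t "t+a"] c unfolding N_def
        by (intro add_left_mono mult_left_mono) auto
      also have "\<dots> = M" unfolding M_def using c by (simp add: field_simps)
      finally have "norm (A (of_real (t + a)) - A (of_real t)) \<le> M" .
      then show ?thesis unfolding H_def by simp
    qed
    have strip: "norm (H z) \<le> M * exp (T * \<bar>Im z\<bar>)" for z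
      by (rule PL_strip[OF holH growH reH M0 T0])
    have "norm ((deriv ^^ 1) H (of_real x)) \<le> fact 1 * (M * exp T) / 1 ^ 1"
    proof (rule Cauchy_inequality)
      show "H holomorphic_on ball (of_real x) 1" using holH by (rule holomorphic_on_subset) auto
      show "continuous_on (cball (of_real x) 1) H"
        using holomorphic_on_imp_continuous_on[OF holH] by (rule continuous_on_subset) auto
      fix w :: complex assume w: "norm (of_real x - w) = 1"
      have "\<bar>Im w\<bar> = \<bar>Im (complex_of_real x - w)\<bar>" by simp
      also have "\<dots> \<le> 1" using abs_Im_le_cmod[of "complex_of_real x - w"] w by simp
      finally have "exp (T * \<bar>Im w\<bar>) \<le> exp T" using T0 by (simp add: mult_left_le)
      then show "norm (H w) \<le> M * exp T" using strip[of w] M0 by (meson mult_left_mono less_imp_le order_trans)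
    qed simp
    then have "norm (deriv H (of_real x)) \<le> M * exp T" by simp
    moreover have "deriv H (of_real x) = F (of_real (x + a)) - F (of_real x)"
      using DERIV_imp_deriv[OF dH] by simp
    moreover have "M \<le> c + N / (2*c)" unfolding M_def using a c by (simp add: field_simps)
    ultimately show ?thesis by (smt (verit) exp_gt_zero mult_right_mono)
  qed
  have step2: "f x \<le> N + 2 * ((c + N/(2*c)) * exp T)^2" if c: "c > 0" for c
  proof -
    define D where "D = (c + N/(2*c)) * exp T"
    have D0: "D \<ge> 0" unfolding D_def using c N0 by simp
    have pt: "f x \<le> 2 * f t + 2 * D^2" if t: "t \<in> {x..x+2}" for t
    proof (cases "t = x")
      case True then show ?thesis using f0[of x] D0 by simp
    next
      case False
      then have "norm (F (of_real (x + (t - x))) - F (of_real x)) \<le> D"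
        unfolding D_def using t by (intro key c) auto
      then have "norm (F (of_real t) - F (of_real x)) \<le> D" by simp
      then have "norm (F (of_real x)) \<le> norm (F (of_real t)) + D"
        using norm_triangle_ineq2[of "F (of_real x)" "F (of_real t)"] by (simp add: norm_minus_commute)
      then have "(norm (F (of_real x)))^2 \<le> (norm (F (of_real t)) + D)^2"
        by (intro power_mono) auto
      also have "\<dots> \<le> 2 * (norm (F (of_real t)))^2 + 2 * D^2"
        using sum_squares_ge_zero[of "norm (F (of_real t)) - D" 0] by (simp add: power2_eq_square algebra_simps)
      finally show ?thesis by (simp add: f_def)
    qed
    have fi: "f integrable_on {x..x+2}" using interval_le_lborel(1)[OF fint f0] .
    have "integral {x..x+2} (\<lambda>t. f x) \<le> integral {x..x+2} (\<lambda>t. 2 * f t + 2 * D^2)"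
      by (rule integral_le) (use pt fi in \<open>auto intro!: integrable_add integrable_const_ivl integrable_on_mult_right\<close>)
    also have "\<dots> = integral {x..x+2} (\<lambda>t. 2 * f t) + integral {x..x+2} (\<lambda>t. 2 * D^2)"
      by (rule integral_add[OF integrable_on_mult_right[OF fi] integrable_const_ivl])
    also have "\<dots> = 2 * integral {x..x+2} f + 4 * D^2"
      by simp
    also have "\<dots> \<le> 2 * N + 4 * D^2" using interval_le_lborel(2)[OF fint f0, of x "x+2"] unfolding N_def by simp
    finally have "2 * f x \<le> 2 * N + 4 * D^2" by simp
    then show ?thesis unfolding D_def by simp
  qed
  have "f x \<le> (1 + 5 * exp (2*T)) * N"
  proof (cases "N > 0")
    case True
    have "f x \<le> N + 2 * ((sqrt N + N/(2 * sqrt N)) * exp T)^2" using step2[of "sqrt N"] True by simp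
    also have "(sqrt N + N/(2 * sqrt N)) = (3/2) * sqrt N" using True
      by (simp add: field_simps)
    also have "N + 2 * ((3/2) * sqrt N * exp T)^2 = (1 + 9/2 * (exp T)^2) * N"
      using True by (simp add: power_mult_distrib power_divide algebra_simps)
    also have "\<dots> \<le> (1 + 5 * exp (2*T)) * N"
    proof -
      have "exp T * exp T = exp (2*T)" by (simp flip: exp_add)
      then have "9/2 * (exp T)^2 \<le> 5 * exp (2*T)" by (simp add: power2_eq_square)
      then show ?thesis using True by (intro mult_right_mono) auto
    qed
    finally show ?thesis .
  next
    case False
    then have N: "N = 0" using N0 by simp
    show ?thesis
    proof (rule ccontr)
      assume "\<not> ?thesis"
      then have fx: "f x > 0" using N by simp
      define c where "c = sqrt (f x / (4 * exp (2*T)))"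
      have c0: "c > 0" unfolding c_def using fx by simp
      have e2: "(exp T)^2 = exp (2*T)"
      proof -
        have "exp T * exp T = exp (2*T)" by (simp flip: exp_add)
        then show ?thesis by (simp add: power2_eq_square)
      qed
      have c2: "c^2 = f x / (4 * exp (2*T))" unfolding c_def using fx by simp
      have "f x \<le> 2 * (c * exp T)^2" using step2[OF c0] N by simp
      also have "\<dots> = 2 * c^2 * exp (2*T)" by (simp add: power_mult_distrib e2)
      also have "\<dots> = f x / 2" unfolding c2 by simp
      finally show False using fx by simp
    qed
  qed
  then show ?thesis unfolding f_def N_def T_def by simp
qed

lemma sinc2_even: "sinc2 (- x) = sinc2 x"
  by (simp add: sinc2_def)

lemma sinc2_abs: "sinc2 x = sinc2 \<bar>x\<bar>"
  by (cases "x \<ge> 0") (auto simp: sinc2_even)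

lemma sinc2_le1: "\<bar>sinc2 x\<bar> \<le> 1"
proof (cases "x = 0")
  case False
  have "\<bar>sin (2*pi*x)\<bar> \<le> \<bar>2*pi*x\<bar>" by (rule abs_sin_x_le_abs_x)
  then show ?thesis using False by (simp add: sinc2_def abs_divide divide_le_eq_1)
qed (simp add: sinc2_def)

lemma sinc2_large: assumes "\<bar>x\<bar> \<ge> 1/2" shows "\<bar>sinc2 x\<bar> \<le> 1/2"
proof -
  have x0: "x \<noteq> 0" using assms by auto
  define a where "a = \<bar>2*pi*x\<bar>"
  have "a = 2*pi*\<bar>x\<bar>" unfolding a_def by (simp add: abs_mult)
  also have "2*pi*\<bar>x\<bar> \<ge> 2*pi*(1/2)" using assms by (intro mult_left_mono) auto
  finally have "a \<ge> pi" by simp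
  then have a2: "a \<ge> 2" using pi_gt3 by linarith
  have "\<bar>sin (2*pi*x)\<bar> / a \<le> 1 / a" using a2 by (intro divide_right_mono) auto
  also have "1 / a \<le> 1 / 2" using a2 by (intro divide_left_mono) auto
  finally have "\<bar>sin (2*pi*x)\<bar> / \<bar>2*pi*x\<bar> \<le> 1 / 2" unfolding a_def .
  then show ?thesis using x0 by (simp add: sinc2_def abs_divide)
qed

lemma sinc2_small_nonneg: assumes "\<bar>x\<bar> \<le> 1/2" shows "sinc2 x \<ge> 0"
proof -
  have "sinc2 x = sinc2 \<bar>x\<bar>" by (rule sinc2_abs)
  moreover have "sinc2 \<bar>x\<bar> \<ge> 0"
  proof (cases "x = 0")
    case False
    have "2*pi*\<bar>x\<bar> \<le> pi" using assms by (simp add: field_simps)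
    then have "sin (2*pi*\<bar>x\<bar>) \<ge> 0" by (intro sin_ge_zero) auto
    then show ?thesis using False by (simp add: sinc2_def)
  qed (simp add: sinc2_def)
  ultimately show ?thesis by simp
qed

lemma one_plus_sinc2: "1 + sinc2 x \<ge> 1/2"
proof (cases "\<bar>x\<bar> \<le> 1/2")
  case True then show ?thesis using sinc2_small_nonneg[OF True] by simp
next
  case False then show ?thesis using sinc2_large[of x] by linarith
qed

lemma one_minus_sinc2_ge: "1 - sinc2 x \<ge> 0"
  using sinc2_le1[of x] by linarith

lemma sinc2_away:
  assumes e: "e > 0"
  obtains c where "c > 0" "c \<le> 1/2" "\<And>x. \<bar>x\<bar> \<ge> e \<Longrightarrow> 1 - sinc2 x \<ge> c"
proof -
  define e' where "e' = min e (1/2)"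
  have e'0: "e' > 0" "e' \<le> 1/2" "e' \<le> e" using e by (auto simp: e'_def)
  define c where "c = min (1/2) (1 - cos (pi * e'))"
  have "cos (pi * e') < cos 0" using e'0 by (intro cos_monotone_0_pi) (auto simp: mult_pos_pos)
  then have c0: "c > 0" unfolding c_def by simp
  have "1 - sinc2 x \<ge> c" if x: "\<bar>x\<bar> \<ge> e" for x
  proof (cases "\<bar>x\<bar> \<ge> 1/2")
    case True then show ?thesis using sinc2_large[OF True] unfolding c_def by linarith
  next
    case False
    define y where "y = \<bar>x\<bar>"
    have y: "y > 0" "y < 1/2" "y \<ge> e'" using x e False e'0 by (auto simp: y_def)
    define t where "t = pi * y"
    have t: "t > 0" "t \<le> pi/2" "t \<ge> pi * e'" using y by (auto simp: t_def)
    have "2*pi*y = 2*t" by (simp add: t_def)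
    then have "sin (2*pi*y) = sin (2*t)" by (rule arg_cong)
    also have "\<dots> = 2 * sin t * cos t" by (rule sin_double)
    finally have "sin (2*pi*y) = 2 * sin t * cos t" .
    also have "\<dots> \<le> 2 * t * cos t"
    proof -
      have "cos t \<ge> 0" using t by (intro cos_ge_zero) auto
      moreover have "sin t \<le> t" using t by (intro sin_x_le_x) auto
      ultimately show ?thesis by (simp add: mult_right_mono)
    qed
    finally have "sin (2*pi*y) / (2*pi*y) \<le> cos t" using t y by (simp add: t_def divide_le_eq field_simps)
    moreover have "cos t \<le> cos (pi * e')" using t e'0 by (intro cos_monotone_0_pi_le) auto
    ultimately have "sinc2 y \<le> cos (pi * e')" using y by (simp add: sinc2_def)
    then show ?thesis using sinc2_abs[of x] unfolding y_def c_def by linarith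
  qed
  moreover have "c \<le> 1/2" unfolding c_def by (rule min.cobounded1)
  ultimately show ?thesis using that c0 by blast
qed

lemma sinc2_meas: "sinc2 \<in> borel_measurable borel"
  unfolding sinc2_def[abs_def] by measurable

declare sinc2_meas[measurable]

lemma Wac_nonneg: "Wac G x \<ge> 0"
  using one_minus_sinc2_ge[of x] one_plus_sinc2[of x] by (cases G) auto

lemma Wac_le2: "Wac G x \<le> 2"
  using sinc2_le1[of x] by (cases G) auto

lemma Wac_large: "\<bar>x\<bar> \<ge> 1 \<Longrightarrow> Wac G x \<ge> 1/2"
  using sinc2_large[of x] one_plus_sinc2[of x] by (cases G) auto

lemma Wac_away:
  assumes e: "e > 0"
  obtains c where "c > 0" "c \<le> 1/2" "\<And>G x. \<bar>x\<bar> \<ge> e \<Longrightarrow> Wac G x \<ge> c"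
proof -
  obtain c where c: "c > 0" "c \<le> 1/2" "\<And>x. \<bar>x\<bar> \<ge> e \<Longrightarrow> 1 - sinc2 x \<ge> c"
    using sinc2_away[OF e] by blast
  have "Wac G x \<ge> c" if "\<bar>x\<bar> \<ge> e" for G x
    using c(2) c(3)[OF that] one_plus_sinc2[of x] by (cases G) auto
  then show ?thesis using that c by blast
qed

lemma Wac_meas: "(\<lambda>x. Wac G x) \<in> borel_measurable borel"
  by (cases G; simp; measurable)

lemma Wdelta_bounds: "0 \<le> Wdelta G" "Wdelta G \<le> 1"
  by (cases G; simp)+

lemma f_cont:
  assumes "F holomorphic_on UNIV"
  shows "continuous_on S (\<lambda>x::real. (cmod (F (of_real x)))\<^sup>2)"
proof -
  have contF: "continuous_on UNIV F" using assms by (rule holomorphic_on_imp_continuous_on)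
  have "continuous_on S (\<lambda>t. F (of_real t))"
    by (rule continuous_on_compose2[OF contF]) (auto intro: continuous_intros)
  then show ?thesis by (intro continuous_intros)
qed

lemma f_meas:
  assumes "F holomorphic_on UNIV"
  shows "(\<lambda>x::real. (cmod (F (of_real x)))\<^sup>2) \<in> borel_measurable lborel"
  using borel_measurable_continuous_onI[OF f_cont[OF assms]] by simp

lemma g_meas:
  assumes "F holomorphic_on UNIV"
  shows "(\<lambda>x::real. (cmod (F (of_real x)))\<^sup>2 * Wac G x) \<in> borel_measurable lborel"
proof -
  have "(\<lambda>x. Wac G x) \<in> borel_measurable lborel" using Wac_meas by simp
  then show ?thesis using f_meas[OF assms] by (rule borel_measurable_times[rotated])
qed

lemma W_integrable:
  assumes hol: "F holomorphic_on UNIV" and int: "integrable lborel (\<lambda>x. (cmod (F (of_real x)))\<^sup>2)"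
  shows "integrable lborel (\<lambda>x. (cmod (F (of_real x)))\<^sup>2 * Wac G x)"
proof (rule Bochner_Integration.integrable_bound[OF Bochner_Integration.integrable_mult_right[OF int, of 2] g_meas[OF hol]])
  show "AE x in lborel. norm ((cmod (F (of_real x)))\<^sup>2 * Wac G x) \<le> norm (2 * (cmod (F (of_real x)))\<^sup>2)"
  proof (rule AE_I2)
    fix x
    have "(cmod (F (of_real x)))\<^sup>2 * Wac G x \<le> (cmod (F (of_real x)))\<^sup>2 * 2"
      using Wac_le2[of G x] by (intro mult_left_mono) auto
    then show "norm ((cmod (F (of_real x)))\<^sup>2 * Wac G x) \<le> norm (2 * (cmod (F (of_real x)))\<^sup>2)"
      using Wac_nonneg[of G x] by (simp add: abs_mult)
  qed
qed

lemma equiv_int: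
  assumes hol: "F holomorphic_on UNIV"
  shows "integrable lborel (\<lambda>x. (cmod (F (of_real x)))\<^sup>2) \<longleftrightarrow>
         (\<integral>\<^sup>+ x. ennreal ((cmod (F (of_real x)))\<^sup>2 * Wac G x) \<partial>lborel) < \<infinity>"
proof -
  define f where "f x = (cmod (F (of_real x)))\<^sup>2" for x :: real
  define g where "g x = f x * Wac G x" for x
  have g0: "g x \<ge> 0" for x unfolding g_def f_def using Wac_nonneg[of G x] by simp
  have gm: "g \<in> borel_measurable lborel" using g_meas[OF hol] unfolding g_def f_def .
  have fm: "f \<in> borel_measurable lborel" using f_meas[OF hol] unfolding f_def .
  have "integrable lborel g \<longleftrightarrow> (\<integral>\<^sup>+ x. ennreal (norm (g x)) \<partial>lborel) < \<infinity>"
    using gm by (simp add: integrable_iff_bounded)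
  also have "(\<integral>\<^sup>+ x. ennreal (norm (g x)) \<partial>lborel) = (\<integral>\<^sup>+ x. ennreal (g x) \<partial>lborel)"
    using g0 by (intro nn_integral_cong) simp
  finally have ig: "integrable lborel g \<longleftrightarrow> (\<integral>\<^sup>+ x. ennreal (g x) \<partial>lborel) < \<infinity>" .
  have "integrable lborel f \<longleftrightarrow> integrable lborel g"
  proof
    assume "integrable lborel f"
    then show "integrable lborel g" using W_integrable[OF hol] unfolding g_def f_def by blast
  next
    assume gi: "integrable lborel g"
    obtain B where B: "\<And>x. x \<in> {-1..1} \<Longrightarrow> f x \<le> B"
      using continuous_attains_sup[of "{-1..1::real}" f] f_cont[OF hol] unfolding f_def by fastforce
    define h where "h x = 2 * g x + B * indicator {-1..1::real} x" for x
    have hi: "integrable lborel h" unfolding h_def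
      by (intro Bochner_Integration.integrable_add Bochner_Integration.integrable_mult_right gi integrable_real_indicator) auto
    show "integrable lborel f"
    proof (rule Bochner_Integration.integrable_bound[OF hi fm], rule AE_I2)
      fix x
      have "f x \<le> h x"
      proof (cases "x \<in> {-1..1}")
        case True then show ?thesis using B[OF True] g0[of x] by (simp add: h_def)
      next
        case False
        then have "\<bar>x\<bar> \<ge> 1" by auto
        then have "Wac G x \<ge> 1/2" by (rule Wac_large)
        then have "f x * (1/2) \<le> f x * Wac G x" unfolding f_def by (intro mult_left_mono) auto
        then show ?thesis using False by (simp add: h_def g_def)
      qed
      moreover have "f x \<ge> 0" unfolding f_def by simp
      ultimately show "norm (f x) \<le> norm (h x)" by simp
    qed
  qed
  then show ?thesis using ig unfolding g_def f_def by simp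
qed

theorem proposition12:
  fixes G :: symgroup and \<Delta> :: real
  assumes "\<Delta> > 0"
  shows "(\<forall>F. F holomorphic_on UNIV \<longrightarrow> (F \<in> PW (pi * \<Delta>) \<longleftrightarrow> F \<in> PWG G (pi * \<Delta>)))
       \<and> (\<exists>Cp Cm. Cp > 0 \<and> Cm > 0 \<and>
            (\<forall>F \<in> PW (pi * \<Delta>). Cm * L2norm F \<le> WL2norm G F \<and> WL2norm G F \<le> Cp * L2norm F))"
proof
  show "\<forall>F. F holomorphic_on UNIV \<longrightarrow> (F \<in> PW (pi * \<Delta>) \<longleftrightarrow> F \<in> PWG G (pi * \<Delta>))"
    using equiv_int unfolding PW_def PWG_def by blast
next
  define \<tau> where "\<tau> = pi * \<Delta>"
  have \<tau>0: "\<tau> \<ge> 0" using assms by (simp add: \<tau>_def)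
  define K where "K = 1 + 5 * exp (2*(\<tau>+1))"
  have K1: "K \<ge> 1" unfolding K_def by simp
  define e where "e = 1 / (4 * K)"
  have e0: "e > 0" using K1 by (simp add: e_def)
  obtain c where c: "c > 0" "c \<le> 1/2" "\<And>G x. \<bar>x\<bar> \<ge> e \<Longrightarrow> Wac G x \<ge> c"
    using Wac_away[OF e0] by blast
  define Cp where "Cp = sqrt (2 + K)"
  define Cm where "Cm = sqrt (c / 2)"
  have "Cm * L2norm F \<le> WL2norm G F \<and> WL2norm G F \<le> Cp * L2norm F" if F: "F \<in> PW (pi * \<Delta>)" for F
  proof -
    have hol: "F holomorphic_on UNIV" and et: "exp_type_le F \<tau>"
      and int: "integrable lborel (\<lambda>x. (cmod (F (of_real x)))\<^sup>2)"
      using F unfolding PW_def \<tau>_def by auto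
    define f where "f x = (cmod (F (of_real x)))\<^sup>2" for x :: real
    define N where "N = integral\<^sup>L lborel f"
    define Wi where "Wi = integral\<^sup>L lborel (\<lambda>x. f x * Wac G x)"
    have fint: "integrable lborel f" using int by (simp add: f_def[abs_def])
    have gint: "integrable lborel (\<lambda>x. f x * Wac G x)"
      using W_integrable[OF hol int] by (simp add: f_def[abs_def])
    have f0: "f x \<ge> 0" for x by (simp add: f_def)
    have N0: "N \<ge> 0" unfolding N_def by (intro integral_nonneg_AE) (simp add: f0)
    have PB: "f x \<le> K * N" for x
      using PW_pointbound[OF hol et \<tau>0 int, of x] unfolding f_def[abs_def] N_def K_def by simp
    have L2: "L2norm F = sqrt N" unfolding L2norm_def N_def f_def[abs_def] by simp
    have WL: "WL2norm G F = sqrt (Wi + Wdelta G * f 0)" unfolding WL2norm_def Wi_def f_def by simp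
    have upper: "Wi \<le> 2 * N"
    proof -
      have "Wi \<le> integral\<^sup>L lborel (\<lambda>x. 2 * f x)" unfolding Wi_def
      proof (rule integral_mono[OF gint Bochner_Integration.integrable_mult_right[OF fint]])
        fix x show "f x * Wac G x \<le> 2 * f x" using Wac_le2[of G x] f0[of x] by (simp add: mult_left_mono mult.commute)
      qed
      then show ?thesis unfolding N_def by simp
    qed
    have d1: "Wdelta G * f 0 \<le> K * N"
      using Wdelta_bounds[of G] PB[of 0] f0[of 0] by (smt (verit) mult_left_le_one_le)
    have d0: "Wdelta G * f 0 \<ge> 0" using Wdelta_bounds[of G] f0[of 0] by simp
    have lower: "c / 2 * N \<le> Wi"
    proof -
      define r where "r x = c * f x - (c * K * N) * indicator {-e..e} x" for x
      have rint: "integrable lborel r" unfolding r_def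
        by (intro Bochner_Integration.integrable_diff Bochner_Integration.integrable_mult_right fint integrable_real_indicator) (use e0 in auto)
      have "integral\<^sup>L lborel r = c * N - (c * K * N) * (2 * e)"
        unfolding r_def using fint e0
        by (simp add: Bochner_Integration.integral_diff[OF Bochner_Integration.integrable_mult_right[OF fint] Bochner_Integration.integrable_mult_right[OF integrable_real_indicator]] N_def)
      also have "\<dots> = c / 2 * N" unfolding e_def using K1 by (simp add: field_simps)
      finally have ri: "integral\<^sup>L lborel r = c / 2 * N" .
      have "integral\<^sup>L lborel r \<le> Wi" unfolding Wi_def
      proof (rule integral_mono[OF rint gint])
        fix x
        show "r x \<le> f x * Wac G x"
        proof (cases "x \<in> {-e..e}")
          case True
          have "c * f x \<le> c * (K * N)" using PB[of x] c by (intro mult_left_mono) auto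
          then have "r x \<le> 0" using True by (simp add: r_def)
          then show ?thesis using f0[of x] Wac_nonneg[of G x] by (smt (verit) mult_nonneg_nonneg)
        next
          case False
          then have "\<bar>x\<bar> \<ge> e" by auto
          then have "Wac G x \<ge> c" by (rule c(3))
          then have "f x * c \<le> f x * Wac G x" using f0[of x] by (intro mult_left_mono) auto
          then show ?thesis using False by (simp add: r_def mult.commute)
        qed
      qed
      then show ?thesis using ri by simp
    qed
    have "Cm * L2norm F = sqrt (c / 2 * N)" unfolding Cm_def L2 by (rule real_sqrt_mult[symmetric])
    also have "\<dots> \<le> WL2norm G F" unfolding WL using lower d0 by simp
    finally have A: "Cm * L2norm F \<le> WL2norm G F" .
    have "WL2norm G F \<le> sqrt ((2 + K) * N)" unfolding WL using upper d1 by (simp add: algebra_simps)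
    also have "\<dots> = Cp * L2norm F" unfolding Cp_def L2 by (simp add: real_sqrt_mult)
    finally show ?thesis using A by simp
  qed
  moreover have "Cp > 0" "Cm > 0" unfolding Cp_def Cm_def using K1 c by auto
  ultimately show "\<exists>Cp Cm. Cp > 0 \<and> Cm > 0 \<and>
            (\<forall>F \<in> PW (pi * \<Delta>). Cm * L2norm F \<le> WL2norm G F \<and> WL2norm G F \<le> Cp * L2norm F)" by blast
qed

end
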